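(* Let $A\subset\mathbb{N}$. Suppose there exist a Følner sequence $\Phi$ in $\mathbb{N}$, a set $L\subset\mathbb{N}$ and $\epsilon>0$ such that $\mathsf{d}_\Phi\big((A-m)\cap L\big)$ exists for every $m\in\mathbb{N}$, and such that for every finite subset $F\subset L$ the set $$\bigcap_{\ell\in F}(A-\ell)\ \cap\ \Big\{m\in\mathbb{N}:\mathsf{d}_\Phi\big((A-m)\cap L\big)>\epsilon\Big\}$$ is infinite. Then there exist infinite sets $B,C\subset\mathbb{N}$ such that $B+C\subset A$.
   Context: A Følner sequence in $\mathbb{N}$ is a sequence $\Phi\colon N\mapsto\Phi_N$ of finite non-empty subsets of $\mathbb{N}$ with $|(\Phi_N+m)\triangle\Phi_N|/|\Phi_N|\to0$ for all $m\in\mathbb{N}$. For $E\subset\mathbb{N}$, $\mathsf{d}_\Phi(E)=\lim_{N\to\infty}|E\cap\Phi_N|/|\Phi_N|$ when the limit exists. For $m\in\mathbb{N}$, $A-m=\{n\in\mathbb{N}:n+m\in A\}$. *)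

theory Defs
  imports "HOL-Analysis.Analysis"
begin

text \<open>Convention: the paper's N is the set of positive integers, modelled as
  the subset {1..} of nat.\<close>

abbreviation Npos :: "nat set" where "Npos \<equiv> {1..}"

definition folner :: "(nat \<Rightarrow> nat set) \<Rightarrow> bool" where
  "folner \<Phi> \<longleftrightarrow>
     (\<forall>N. finite (\<Phi> N) \<and> \<Phi> N \<noteq> {} \<and> \<Phi> N \<subseteq> Npos) \<and>
     (\<forall>m\<in>Npos. (\<lambda>N. real (card (((\<lambda>x. x + m) ` \<Phi> N) - \<Phi> N \<union> (\<Phi> N - ((\<lambda>x. x + m) ` \<Phi> N))))
                     / real (card (\<Phi> N))) \<longlonglongrightarrow> 0)"

definition dens_seq :: "(nat \<Rightarrow> nat set) \<Rightarrow> nat set \<Rightarrow> nat \<Rightarrow> real" where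
  "dens_seq \<Phi> E N = real (card (E \<inter> \<Phi> N)) / real (card (\<Phi> N))"

definition density_exists :: "(nat \<Rightarrow> nat set) \<Rightarrow> nat set \<Rightarrow> bool" where
  "density_exists \<Phi> E \<longleftrightarrow> convergent (dens_seq \<Phi> E)"

definition density :: "(nat \<Rightarrow> nat set) \<Rightarrow> nat set \<Rightarrow> real" where
  "density \<Phi> E = lim (dens_seq \<Phi> E)"

definition shiftset :: "nat set \<Rightarrow> nat \<Rightarrow> nat set" where
  "shiftset A m = {n \<in> Npos. n + m \<in> A}"

end

theory Submission
  imports Defs
begin


lemma cluster_closed:
  assumes "inf (nhds x) (filtermap D sequentially) \<noteq> bot" "closed C"
    "eventually (\<lambda>N. D N \<in> C) sequentially"
  shows "x \<in> C"
proof (rule ccontr)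
  assume "x \<notin> C"
  then have "eventually (\<lambda>y. y \<in> -C) (nhds x)" using assms(2)
    by (intro eventually_nhds_in_open) auto
  moreover have "eventually (\<lambda>y. y \<in> C) (filtermap D sequentially)"
    using assms(3) by (simp add: eventually_filtermap)
  ultimately have "eventually (\<lambda>y. False) (inf (nhds x) (filtermap D sequentially))"
    unfolding eventually_inf by (intro exI[of _ "\<lambda>y. y \<in> -C"] exI[of _ "\<lambda>y. y\<in>C"]) auto
  then show False using assms(1) by (simp add: eventually_False)
qed

lemma exists_cluster:
  fixes \<Phi> :: "nat \<Rightarrow> nat set"
  assumes "\<And>N. finite (\<Phi> N)"
  shows "\<exists>x::nat set \<Rightarrow> real. (\<forall>E. 0 \<le> x E \<and> x E \<le> 1) \<and>
     (\<forall>C. closed C \<longrightarrow> eventually (\<lambda>N. (\<lambda>E. dens_seq \<Phi> E N) \<in> C) sequentially \<longrightarrow> x \<in> C)"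
proof -
  define K where "K = PiE UNIV (\<lambda>_::nat set. {0..1::real})"
  have "compactin (product_topology (\<lambda>_. euclidean) UNIV) K"
    unfolding K_def by (subst compactin_PiE) auto
  then have cK: "compact K"
    by (simp add: euclidean_product_topology)
  define D where "D = (\<lambda>N E. dens_seq \<Phi> E N)"
  have inK: "D N \<in> K" for N
  proof -
    have "card (E \<inter> \<Phi> N) \<le> card (\<Phi> N)" for E
      using assms by (intro card_mono) auto
    then show ?thesis
      unfolding K_def D_def dens_seq_def
      by (auto simp: divide_le_eq_1 intro: card_mono)
  qed
  have "filtermap D sequentially \<noteq> bot" by (simp add: filtermap_bot_iff)
  moreover have "eventually (\<lambda>f. f \<in> K) (filtermap D sequentially)"
    using inK by (simp add: eventually_filtermap)
  ultimately obtain x where x: "x \<in> K" "inf (nhds x) (filtermap D sequentially) \<noteq> bot"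
    using cK unfolding compact_filter by blast
  show ?thesis
  proof (intro exI conjI allI impI)
    fix E show "0 \<le> x E" "x E \<le> 1" using x(1) unfolding K_def by auto
  next
    fix C :: "(nat set \<Rightarrow> real) set"
    assume "closed C" "eventually (\<lambda>N. (\<lambda>E. dens_seq \<Phi> E N) \<in> C) sequentially"
    then show "x \<in> C" using cluster_closed[OF x(2)] unfolding D_def by blast
  qed
qed



lemma dens_indicator:
  assumes "finite P"
  shows "real (card (E \<inter> P)) / real (card P) = (\<Sum>y\<in>P. indicator E y) / real (card P)"
proof -
  have "(\<Sum>y\<in>P. indicator E y::real) = of_nat (card (P \<inter> E))"
    using assms by (simp add: indicator_def sum.If_cases Int_def)
  then show ?thesis by (simp add: Int_commute)
qed

lemma pair_dens:
  fixes P :: "nat set" and F :: "'a \<Rightarrow> nat set"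
  assumes P: "finite P" "P \<noteq> {}"
  shows "(\<Sum>j\<in>S. real (card (F j \<inter> P)) / real (card P))\<^sup>2
     \<le> (\<Sum>a\<in>S. \<Sum>b\<in>S. real (card ((F a \<inter> F b) \<inter> P)) / real (card P))"
proof -
  define n where "n = real (card P)"
  have n: "n > 0" using P by (simp add: n_def card_gt_0_iff)
  define g where "g y = (\<Sum>j\<in>S. indicator (F j) y :: real)" for y
  have L: "(\<Sum>j\<in>S. real (card (F j \<inter> P)) / real (card P)) = (\<Sum>y\<in>P. g y) / n"
    unfolding dens_indicator[OF P(1)] g_def n_def
  proof -
    have sw: "(\<Sum>j\<in>S. \<Sum>y\<in>P. indicator (F j) y :: real) = (\<Sum>y\<in>P. \<Sum>j\<in>S. indicator (F j) y)"
      by (rule sum.swap)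
    show "(\<Sum>j\<in>S. (\<Sum>y\<in>P. indicator (F j) y) / real (card P)) = (\<Sum>y\<in>P. \<Sum>j\<in>S. indicator (F j) y) / real (card P)"
      by (simp add: sum_divide_distrib[symmetric] sw)
  qed
  have sq: "(g y)\<^sup>2 = (\<Sum>a\<in>S. \<Sum>b\<in>S. indicator (F a \<inter> F b) y)" for y
    unfolding g_def power2_eq_square sum_product indicator_inter_arith by simp
  have R: "(\<Sum>a\<in>S. \<Sum>b\<in>S. real (card ((F a \<inter> F b) \<inter> P)) / real (card P)) = (\<Sum>y\<in>P. (g y)\<^sup>2) / n"
    unfolding dens_indicator[OF P(1)] sq n_def
  proof -
    have "(\<Sum>a\<in>S. \<Sum>b\<in>S. \<Sum>y\<in>P. indicator (F a \<inter> F b) y) = (\<Sum>a\<in>S. \<Sum>y\<in>P. \<Sum>b\<in>S. (indicator (F a \<inter> F b) y::real))"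
      by (intro sum.cong refl sum.swap)
    also have "\<dots> = (\<Sum>y\<in>P. \<Sum>a\<in>S. \<Sum>b\<in>S. (indicator (F a \<inter> F b) y::real))"
      by (rule sum.swap)
    finally show "(\<Sum>a\<in>S. \<Sum>b\<in>S. (\<Sum>y\<in>P. indicator (F a \<inter> F b) y) / real (card P)) = (\<Sum>y\<in>P. \<Sum>a\<in>S. \<Sum>b\<in>S. indicator (F a \<inter> F b) y) / real (card P)"
      by (simp add: sum_divide_distrib[symmetric])
  qed
  have cs: "(\<Sum>y\<in>P. g y)\<^sup>2 \<le> (\<Sum>y\<in>P. (g y)\<^sup>2) * n"
    unfolding n_def by (rule sum_squared_le_sum_of_squares)
  have "(\<Sum>y\<in>P. g y)\<^sup>2 / n\<^sup>2 \<le> ((\<Sum>y\<in>P. (g y)\<^sup>2) * n) / n\<^sup>2"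
    using cs n by (intro divide_right_mono) auto
  also have "\<dots> = (\<Sum>y\<in>P. (g y)\<^sup>2) / n" using n by (simp add: power2_eq_square)
  finally show ?thesis unfolding L R by (simp add: power_divide)
qed

lemma card_Phi_large:
  assumes "folner \<Phi>"
  shows "eventually (\<lambda>N. T < real (card (\<Phi> N))) sequentially"
proof -
  have fin: "finite (\<Phi> N)" "\<Phi> N \<noteq> {}" for N using assms unfolding folner_def by auto
  define r where "r N = real (card (((\<lambda>x. x + 1) ` \<Phi> N) - \<Phi> N \<union> (\<Phi> N - ((\<lambda>x. x + 1) ` \<Phi> N))))
                     / real (card (\<Phi> N))" for N
  have "\<forall>m\<in>Npos. (\<lambda>N. real (card (((\<lambda>x. x + m) ` \<Phi> N) - \<Phi> N \<union> (\<Phi> N - ((\<lambda>x. x + m) ` \<Phi> N))))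
                     / real (card (\<Phi> N))) \<longlonglongrightarrow> 0" using assms unfolding folner_def by blast
  then have "r \<longlonglongrightarrow> 0" unfolding r_def by (rule bspec) simp
  then have ev: "eventually (\<lambda>N. r N < 1 / (\<bar>T\<bar> + 1)) sequentially"
    by (rule order_tendstoD) simp
  have rge: "1 / real (card (\<Phi> N)) \<le> r N" for N
  proof -
    define M where "M = Max (\<Phi> N)"
    have "M \<in> \<Phi> N" unfolding M_def using fin by simp
    moreover have "M + 1 \<notin> \<Phi> N"
    proof
      assume "M + 1 \<in> \<Phi> N"
      then have "M + 1 \<le> M" unfolding M_def using fin by simp
      then show False by simp
    qed
    ultimately have "M + 1 \<in> ((\<lambda>x. x + 1) ` \<Phi> N) - \<Phi> N" by blast
    then have "1 \<le> card (((\<lambda>x. x + 1) ` \<Phi> N) - \<Phi> N \<union> (\<Phi> N - ((\<lambda>x. x + 1) ` \<Phi> N)))"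
    proof -
      let ?S = "((\<lambda>x. x + 1) ` \<Phi> N) - \<Phi> N \<union> (\<Phi> N - ((\<lambda>x. x + 1) ` \<Phi> N))"
      have "finite ?S" using fin by auto
      moreover have "?S \<noteq> {}" using \<open>M + 1 \<in> ((\<lambda>x. x + 1) ` \<Phi> N) - \<Phi> N\<close> by blast
      ultimately have "card ?S > 0" by (simp add: card_gt_0_iff)
      then show ?thesis by simp
    qed
    then show ?thesis unfolding r_def by (intro divide_right_mono) auto
  qed
  show ?thesis
  proof (rule eventually_mono[OF ev])
    fix N assume "r N < 1 / (\<bar>T\<bar> + 1)"
    with rge[of N] have "1 / real (card (\<Phi> N)) < 1 / (\<bar>T\<bar> + 1)" by linarith
    moreover have "card (\<Phi> N) > 0" using fin by (simp add: card_gt_0_iff)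
    ultimately have "\<bar>T\<bar> + 1 < real (card (\<Phi> N))"
      by (simp add: divide_less_eq field_simps)
    then show "T < real (card (\<Phi> N))" by linarith
  qed
qed

definition clus :: "(nat \<Rightarrow> nat set) \<Rightarrow> (nat set \<Rightarrow> real) \<Rightarrow> bool" where
  "clus \<Phi> x \<longleftrightarrow> (\<forall>E. 0 \<le> x E \<and> x E \<le> 1) \<and>
     (\<forall>C. closed C \<longrightarrow> eventually (\<lambda>N. (\<lambda>E. dens_seq \<Phi> E N) \<in> C) sequentially \<longrightarrow> x \<in> C)"

lemma clus_finite:
  assumes "clus \<Phi> x" "folner \<Phi>" "finite E"
  shows "x E = 0"
proof (rule ccontr)
  assume "x E \<noteq> 0"
  then have pos: "x E > 0" using assms(1) unfolding clus_def by (metis less_eq_real_def)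
  define \<eta> where "\<eta> = x E / 2"
  have \<eta>: "\<eta> > 0" using pos by (simp add: \<eta>_def)
  have fin: "finite (\<Phi> N)" for N using assms(2) unfolding folner_def by auto
  have "eventually (\<lambda>N. real (card E) / \<eta> < real (card (\<Phi> N))) sequentially"
    by (rule card_Phi_large[OF assms(2)])
  then have "eventually (\<lambda>N. (\<lambda>E. dens_seq \<Phi> E N) \<in> {f. f E \<le> \<eta>}) sequentially"
  proof (rule eventually_mono)
    fix N assume h: "real (card E) / \<eta> < real (card (\<Phi> N))"
    have cpos: "real (card (\<Phi> N)) > 0" using h \<eta> by (smt (verit) divide_nonneg_pos of_nat_0_le_iff)
    have "real (card (E \<inter> \<Phi> N)) \<le> real (card E)" using assms(3) by (simp add: card_mono)
    also have "\<dots> \<le> \<eta> * real (card (\<Phi> N))" using h \<eta> by (simp add: divide_less_eq less_imp_le mult.commute)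
    finally show "(\<lambda>E. dens_seq \<Phi> E N) \<in> {f. f E \<le> \<eta>}"
      using cpos by (simp add: dens_seq_def divide_le_eq)
  qed
  moreover have "closed {f::nat set \<Rightarrow> real. f E \<le> \<eta>}"
    by (intro closed_Collect_le continuous_on_product_coordinates continuous_on_const)
  ultimately have "x E \<le> \<eta>" using assms(1) unfolding clus_def by blast
  then show False using pos \<eta>_def by simp
qed

lemma clus_good:
  assumes "clus \<Phi> x" "density_exists \<Phi> E" "density \<Phi> E > \<epsilon>"
  shows "\<epsilon> \<le> x E"
proof -
  have "dens_seq \<Phi> E \<longlonglongrightarrow> density \<Phi> E"
    using assms(2) unfolding density_exists_def density_def by (simp add: convergent_LIMSEQ_iff)
  then have "eventually (\<lambda>N. \<epsilon> < dens_seq \<Phi> E N) sequentially"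
    using assms(3) by (rule order_tendstoD)
  then have "eventually (\<lambda>N. (\<lambda>E. dens_seq \<Phi> E N) \<in> {f. \<epsilon> \<le> f E}) sequentially"
    by (rule eventually_mono) simp
  moreover have "closed {f::nat set \<Rightarrow> real. \<epsilon> \<le> f E}"
    by (intro closed_Collect_le continuous_on_product_coordinates continuous_on_const)
  ultimately show ?thesis using assms(1) unfolding clus_def by blast
qed

lemma clus_pair:
  assumes "clus \<Phi> x" "folner \<Phi>"
  shows "(\<Sum>j\<in>S. x (F j))\<^sup>2 \<le> (\<Sum>a\<in>S. \<Sum>b\<in>S. x (F a \<inter> F b))"
proof -
  have fin: "finite (\<Phi> N)" "\<Phi> N \<noteq> {}" for N using assms(2) unfolding folner_def by auto
  have "eventually (\<lambda>N. (\<lambda>E. dens_seq \<Phi> E N) \<in>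
     {f. (\<Sum>j\<in>S. f (F j))\<^sup>2 \<le> (\<Sum>a\<in>S. \<Sum>b\<in>S. f (F a \<inter> F b))}) sequentially"
    unfolding dens_seq_def mem_Collect_eq by (intro always_eventually allI pair_dens fin)
  moreover have "closed {f::nat set \<Rightarrow> real. (\<Sum>j\<in>S. f (F j))\<^sup>2 \<le> (\<Sum>a\<in>S. \<Sum>b\<in>S. f (F a \<inter> F b))}"
    by (intro closed_Collect_le continuous_intros continuous_on_product_coordinates)
  ultimately show ?thesis using assms(1) unfolding clus_def by blast
qed

lemma key_step:
  fixes x :: "nat set \<Rightarrow> real" and E :: "nat \<Rightarrow> nat set"
  assumes le1: "\<forall>E. 0 \<le> x E \<and> x E \<le> 1"
    and pair: "\<And>(F::nat \<Rightarrow> nat set) S. (\<Sum>j\<in>S. x (F j))\<^sup>2 \<le> (\<Sum>a\<in>S. \<Sum>b\<in>S. x (F a \<inter> F b))"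
    and J: "infinite J" and \<delta>: "\<delta> > 0" and big: "\<forall>j\<in>J. \<delta> \<le> x (G \<inter> E j)"
  shows "\<exists>i\<in>J. infinite {j\<in>J. \<delta>\<^sup>2/2 \<le> x (G \<inter> E i \<inter> E j)}"
proof (rule ccontr)
  assume "\<not> ?thesis"
  then have fin: "\<forall>i\<in>J. finite {j\<in>J. \<delta>\<^sup>2/2 \<le> x (G \<inter> E i \<inter> E j)}" by blast
  have symm: "G \<inter> E a \<inter> E b = G \<inter> E b \<inter> E a" for a b by blast
  have build: "\<exists>S. S \<subseteq> J \<and> finite S \<and> card S = n \<and>
      (\<forall>a\<in>S. \<forall>b\<in>S. a \<noteq> b \<longrightarrow> x (G \<inter> E a \<inter> E b) < \<delta>\<^sup>2/2)" for n
  proof (induction n)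
    case 0 show ?case by (intro exI[of _ "{}"]) auto
  next
    case (Suc n)
    then obtain S where S: "S \<subseteq> J" "finite S" "card S = n"
      "\<forall>a\<in>S. \<forall>b\<in>S. a \<noteq> b \<longrightarrow> x (G \<inter> E a \<inter> E b) < \<delta>\<^sup>2/2" by blast
    define bad where "bad = S \<union> (\<Union>a\<in>S. {j\<in>J. \<delta>\<^sup>2/2 \<le> x (G \<inter> E a \<inter> E j)})"
    have "finite bad" using S fin unfolding bad_def by auto
    then have "infinite (J - bad)" using J by (simp add: Diff_infinite_finite)
    then obtain j where j: "j \<in> J" "j \<notin> bad" by (metis Diff_iff finite.emptyI ex_in_conv)
    have jS: "j \<notin> S" using j unfolding bad_def by blast
    have jlt: "x (G \<inter> E a \<inter> E j) < \<delta>\<^sup>2/2" if "a \<in> S" for a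
      using j that unfolding bad_def by force
    show ?case
    proof (intro exI[of _ "insert j S"] conjI ballI impI)
      show "insert j S \<subseteq> J" using S j by auto
      show "finite (insert j S)" using S by auto
      show "card (insert j S) = Suc n" using S jS by simp
    next
      fix a b assume ab: "a \<in> insert j S" "b \<in> insert j S" "a \<noteq> b"
      show "x (G \<inter> E a \<inter> E b) < \<delta>\<^sup>2/2"
      proof (cases "a = j")
        case True
        then have "b \<in> S" using ab by auto
        then show ?thesis using jlt[of b] True by (simp add: symm[of j b])
      next
        case False
        then have a: "a \<in> S" using ab by auto
        show ?thesis
        proof (cases "b = j")
          case True then show ?thesis using jlt[OF a] by simp
        next
          case False then show ?thesis using a ab S(4) by auto
        qed
      qed
    qed
  qed
  define n where "n = nat \<lceil>2/\<delta>\<^sup>2\<rceil> + 1"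
  have "real n > 2/\<delta>\<^sup>2" unfolding n_def by linarith
  then have n\<delta>: "real n * \<delta>\<^sup>2 > 2" using \<delta> by (simp add: divide_less_eq)
  obtain S where S: "S \<subseteq> J" "finite S" "card S = n"
      "\<forall>a\<in>S. \<forall>b\<in>S. a \<noteq> b \<longrightarrow> x (G \<inter> E a \<inter> E b) < \<delta>\<^sup>2/2" using build by blast
  define F where "F j = G \<inter> E j" for j
  have "real n * \<delta> = (\<Sum>j\<in>S. \<delta>)" using S by simp
  also have "\<dots> \<le> (\<Sum>j\<in>S. x (F j))" using S big unfolding F_def by (intro sum_mono) auto
  finally have s1: "real n * \<delta> \<le> (\<Sum>j\<in>S. x (F j))" .
  have "(real n * \<delta>)\<^sup>2 \<le> (\<Sum>j\<in>S. x (F j))\<^sup>2"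
    using s1 \<delta> by (intro power_mono) auto
  also have "\<dots> \<le> (\<Sum>a\<in>S. \<Sum>b\<in>S. x (F a \<inter> F b))" by (rule pair)
  also have "\<dots> \<le> (\<Sum>a\<in>S. \<Sum>b\<in>S. ((if a = b then 1 else 0) + \<delta>\<^sup>2/2))"
  proof (intro sum_mono)
    fix a b assume ab: "a \<in> S" "b \<in> S"
    show "x (F a \<inter> F b) \<le> (if a = b then 1 else 0) + \<delta>\<^sup>2/2"
    proof (cases "a = b")
      case True
      have "x (F a \<inter> F b) \<le> 1" using le1 by blast
      moreover have "0 \<le> \<delta>\<^sup>2/2" by simp
      ultimately have "x (F a \<inter> F b) \<le> 1 + \<delta>\<^sup>2/2" by linarith
      then show ?thesis using True by simp
    next
      case False
      have "F a \<inter> F b = G \<inter> E a \<inter> E b" unfolding F_def by blast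
      moreover have "x (G \<inter> E a \<inter> E b) < \<delta>\<^sup>2/2" using S(4) ab False by blast
      ultimately show ?thesis using False by simp
    qed
  qed
  also have "\<dots> = (\<Sum>a\<in>S. 1 + real n * (\<delta>\<^sup>2/2))"
  proof (rule sum.cong[OF refl])
    fix a assume a: "a \<in> S"
    have "(\<Sum>b\<in>S. ((if a = b then 1 else 0) + \<delta>\<^sup>2/2)) = (\<Sum>b\<in>S. (if a = b then 1 else 0)) + (\<Sum>b\<in>S. \<delta>\<^sup>2/2)"
      by (rule sum.distrib)
    also have "\<dots> = 1 + real n * (\<delta>\<^sup>2/2)" using a S(2,3) by simp
    finally show "(\<Sum>b\<in>S. ((if a = b then 1 else 0) + \<delta>\<^sup>2/2)) = 1 + real n * (\<delta>\<^sup>2/2)" .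
  qed
  also have "\<dots> = real n + real n * (real n * (\<delta>\<^sup>2/2))"
    using S(3) by (simp add: algebra_simps)
  finally have "(real n * \<delta>)\<^sup>2 \<le> real n + real n * (real n * (\<delta>\<^sup>2/2))" .
  moreover have "(real n * \<delta>)\<^sup>2 = real n * (real n * \<delta>\<^sup>2)" by (simp add: power2_eq_square)
  ultimately have "real n * (real n * \<delta>\<^sup>2 / 2) \<le> real n * 1"
    by linarith
  moreover have "real n > 0" unfolding n_def by (simp del: of_nat_Suc)
  ultimately have "real n * \<delta>\<^sup>2 / 2 \<le> 1" using mult_le_cancel_left_pos by blast
  then show False using n\<delta> by simp
qed

lemma dep_choice:
  assumes "P s0" "\<And>s. P s \<Longrightarrow> \<exists>t. P t \<and> R s t"
  shows "\<exists>f. f 0 = s0 \<and> (\<forall>n. P (f n) \<and> R (f n) (f (Suc n)))"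
proof -
  define f where "f = rec_nat s0 (\<lambda>_ s. SOME t. P t \<and> R s t)"
  have Pf: "P (f n)" for n
  proof (induction n)
    case 0 then show ?case using assms(1) by (simp add: f_def)
  next
    case (Suc n)
    then show ?case using someI_ex[OF assms(2)[OF Suc]] by (simp add: f_def)
  qed
  have "R (f n) (f (Suc n))" for n
    using someI_ex[OF assms(2)[OF Pf[of n]]] by (simp add: f_def)
  then show ?thesis using Pf by (intro exI[of _ f]) (simp add: f_def)
qed


theorem proposition2p5:
  fixes A L :: "nat set" and \<Phi> :: "nat \<Rightarrow> nat set" and \<epsilon> :: real
  assumes "A \<subseteq> Npos" and "L \<subseteq> Npos"
    and "folner \<Phi>" and "\<epsilon> > 0"
    and "\<forall>m\<in>Npos. density_exists \<Phi> (shiftset A m \<inter> L)"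
    and "\<forall>F. finite F \<and> F \<subseteq> L \<longrightarrow>
           infinite ((\<Inter>l\<in>F. shiftset A l) \<inter>
                     {m \<in> Npos. density \<Phi> (shiftset A m \<inter> L) > \<epsilon>})"
  shows "\<exists>B C. B \<subseteq> Npos \<and> C \<subseteq> Npos \<and> infinite B \<and> infinite C \<and>
               {b + c | b c. b \<in> B \<and> c \<in> C} \<subseteq> A"
proof -
  have finPhi: "\<And>N. finite (\<Phi> N)" using assms(3) unfolding folner_def by auto
  have "\<exists>x. clus \<Phi> x" unfolding clus_def by (rule exists_cluster[OF finPhi])
  then obtain x where x: "clus \<Phi> x" by blast
  have le1: "\<forall>E. 0 \<le> x E \<and> x E \<le> 1" using x unfolding clus_def by blast
  have pair: "\<And>(F::nat \<Rightarrow> nat set) S. (\<Sum>j\<in>S. x (F j))\<^sup>2 \<le> (\<Sum>a\<in>S. \<Sum>b\<in>S. x (F a \<inter> F b))"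
    by (rule clus_pair[OF x assms(3)])
  define MM where "MM k = (\<Inter>l\<in>L \<inter> {1..k}. shiftset A l) \<inter>
                     {m \<in> Npos. density \<Phi> (shiftset A m \<inter> L) > \<epsilon>}" for k
  have "infinite (MM k)" for k unfolding MM_def
    using assms(6)[rule_format, of "L \<inter> {1..k}"] by simp
  then have "\<forall>k. \<exists>b. k \<le> b \<and> b \<in> MM k" by (simp add: infinite_nat_iff_unbounded_le)
  then obtain \<beta> where \<beta>: "\<And>k. k \<le> \<beta> k \<and> \<beta> k \<in> MM k" by metis
  define E where "E k = shiftset A (\<beta> k) \<inter> L" for k
  have EL: "E k \<subseteq> L" for k unfolding E_def by blast
  have \<beta>pos: "\<beta> k \<in> Npos" for k using \<beta>[of k] unfolding MM_def by blast
  have Eeps: "\<epsilon> \<le> x (E k)" for k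
  proof -
    have "density_exists \<Phi> (E k)" using assms(5) \<beta>pos[of k] unfolding E_def by blast
    moreover have "density \<Phi> (E k) > \<epsilon>" using \<beta>[of k] unfolding MM_def E_def by blast
    ultimately show ?thesis by (rule clus_good[OF x])
  qed
  have cover: "c \<in> E k" if "c \<in> L" "c \<le> k" for c k
  proof -
    have "c \<in> Npos" using that assms(2) by blast
    then have "c \<in> L \<inter> {1..k}" using that by auto
    then have "\<beta> k \<in> shiftset A c" using \<beta>[of k] unfolding MM_def by blast
    then have "\<beta> k + c \<in> A" unfolding shiftset_def by blast
    then show ?thesis using that \<open>c \<in> Npos\<close> unfolding E_def shiftset_def by (simp add: add.commute)
  qed
  define P where "P = (\<lambda>(G::nat set, J::nat set, \<delta>::real, k::nat, c::nat).
      infinite J \<and> \<delta> > 0 \<and> (\<forall>j\<in>J. \<delta> \<le> x (G \<inter> E j)))"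
  define R where "R = (\<lambda>(G::nat set, J::nat set, \<delta>::real, k::nat, c::nat) (G'::nat set, J'::nat set, \<delta>'::real, k'::nat, c'::nat).
      G' = G \<inter> E k' \<and> c \<le> k' \<and> k < k' \<and> c < c' \<and> c' \<in> G')"
  have P0: "P (UNIV, UNIV, \<epsilon>, 0, 0)" unfolding P_def using Eeps assms(4) by simp
  have step: "\<exists>t. P t \<and> R s t" if "P s" for s
  proof -
    obtain G J \<delta> k c where s: "s = (G, J, \<delta>, k, c)" by (cases s) auto
    have J: "infinite J" and \<delta>: "\<delta> > 0" and big: "\<forall>j\<in>J. \<delta> \<le> x (G \<inter> E j)"
      using that unfolding s P_def by auto
    define J2 where "J2 = J \<inter> {max (Suc k) c..}"
    have "finite (J - J2)" unfolding J2_def by (rule finite_subset[of _ "{..<max (Suc k) c}"]) auto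
    then have J2: "infinite J2" using J
      by (metis Diff_infinite_finite Diff_Diff_Int inf_commute J2_def Int_lower1 infinite_super)
    have big2: "\<forall>j\<in>J2. \<delta> \<le> x (G \<inter> E j)" using big unfolding J2_def by auto
    obtain i where i: "i \<in> J2" and inf': "infinite {j\<in>J2. \<delta>\<^sup>2/2 \<le> x (G \<inter> E i \<inter> E j)}"
      using key_step[OF le1 pair J2 \<delta> big2] by blast
    have "\<delta> \<le> x (G \<inter> E i)" using big2 i by blast
    then have "x (G \<inter> E i) \<noteq> 0" using \<delta> by linarith
    then have "infinite (G \<inter> E i)" using clus_finite[OF x assms(3)] by blast
    then obtain c' where c': "c' \<in> G \<inter> E i" "c < c'"
      by (metis infinite_nat_iff_unbounded)
    define t where "t = (G \<inter> E i, {j\<in>J2. \<delta>\<^sup>2/2 \<le> x (G \<inter> E i \<inter> E j)}, \<delta>\<^sup>2/2, i, c')"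
    have "P t" unfolding t_def P_def using inf' \<delta> by auto
    moreover have "R s t" unfolding t_def s R_def using i c' unfolding J2_def by auto
    ultimately show ?thesis by blast
  qed
  obtain f where f0: "f 0 = (UNIV, UNIV, \<epsilon>, 0, 0)" and fPR: "\<forall>n. P (f n) \<and> R (f n) (f (Suc n))"
  proof -
    have "\<exists>f. f 0 = (UNIV, UNIV, \<epsilon>, 0, 0) \<and> (\<forall>n. P (f n) \<and> R (f n) (f (Suc n)))"
      by (rule dep_choice[where P=P and R=R, OF P0 step])
    then show ?thesis using that by blast
  qed
  define G where "G n = fst (f n)" for n
  define k where "k n = fst (snd (snd (snd (f n))))" for n
  define c where "c n = snd (snd (snd (snd (f n))))" for n
  have Rn: "G (Suc n) = G n \<inter> E (k (Suc n)) \<and> c n \<le> k (Suc n) \<and> k n < k (Suc n)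
      \<and> c n < c (Suc n) \<and> c (Suc n) \<in> G (Suc n)" for n
    using fPR[rule_format, of n] unfolding G_def k_def c_def R_def
    by (cases "f n"; cases "f (Suc n)") auto
  have kmono: "strict_mono k" using Rn by (simp add: strict_mono_Suc_iff)
  have cmono: "strict_mono c" using Rn by (simp add: strict_mono_Suc_iff)
  have GE: "G n \<subseteq> E (k i)" if "1 \<le> i" "i \<le> n" for i n
    using that
  proof (induction n)
    case 0 then show ?case by simp
  next
    case (Suc n)
    show ?case
    proof (cases "i = Suc n")
      case True then show ?thesis using Rn[of n] by blast
    next
      case False
      then have "G n \<subseteq> E (k i)" using Suc by simp
      then show ?thesis using Rn[of n] by blast
    qed
  qed
  have inE: "c (Suc j) \<in> E (k (Suc i))" for i j
  proof (cases "i \<le> j")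
    case True
    then show ?thesis using GE[of "Suc i" "Suc j"] Rn[of j] by auto
  next
    case False
    have "c (Suc j) \<in> E (k 1)" using GE[of 1 "Suc j"] Rn[of j] by auto
    then have cL: "c (Suc j) \<in> L" using EL by blast
    have "c (Suc j) \<le> c i" using False cmono by (simp add: strict_mono_less_eq)
    also have "\<dots> \<le> k (Suc i)" using Rn[of i] by simp
    finally show ?thesis by (rule cover[OF cL])
  qed
  define B where "B = range (\<lambda>i. \<beta> (k (Suc i)))"
  define C where "C = range (\<lambda>j. c (Suc j))"
  have "B \<subseteq> Npos" unfolding B_def using \<beta>pos by auto
  moreover have "C \<subseteq> Npos"
  proof -
    have "c (Suc j) \<in> L" for j using inE[of j 0] EL by blast
    then show ?thesis unfolding C_def using assms(2) by auto
  qed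
  moreover have "infinite C"
  proof -
    have "strict_mono (\<lambda>j. c (Suc j))" using cmono by (simp add: strict_mono_def)
    then have "inj (\<lambda>j. c (Suc j))" by (rule strict_mono_imp_inj_on)
    then show ?thesis unfolding C_def by (rule range_inj_infinite)
  qed
  moreover have "infinite B"
    unfolding infinite_nat_iff_unbounded_le
  proof
    fix m
    have "m \<le> k (Suc m)" using seq_suble[OF kmono, of "Suc m"] by simp
    also have "\<dots> \<le> \<beta> (k (Suc m))" using \<beta> by blast
    finally show "\<exists>n\<ge>m. n \<in> B" unfolding B_def by blast
  qed
  moreover have "{b + c | b c. b \<in> B \<and> c \<in> C} \<subseteq> A"
  proof
    fix y assume "y \<in> {b + c | b c. b \<in> B \<and> c \<in> C}"
    then obtain i j where y: "y = \<beta> (k (Suc i)) + c (Suc j)" unfolding B_def C_def by blast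
    have "c (Suc j) \<in> shiftset A (\<beta> (k (Suc i)))" using inE[of j i] unfolding E_def by blast
    then show "y \<in> A" unfolding y shiftset_def by (simp add: add.commute)
  qed
  ultimately show ?thesis by blast
qed

end
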